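(* For any positive integer $n$, $\chi_{ld}(F_n+B_{n,n})=2n+5$.
   Context: All graphs are finite, simple and undirected. For a graph $G=(V,E)$ of order $N$ without isolated vertices, a bijection $f\colon V\to\{1,2,\dots,N\}$ is a local distance antimagic labeling if $w(u)\neq w(v)$ for every edge $uv$, where $w(u)=\sum_{x\in N(u)}f(x)$ and $N(u)$ is the open neighborhood of $u$. $\chi_{ld}(G)$ is the minimum number of distinct values of $w$ over all local distance antimagic labelings of $G$. The friendship graph $F_n$ consists of $n$ triangles sharing one common vertex. The bistar $B_{n,n}$ has vertices $a,b,x_1,\dots,x_n,y_1,\dots,y_n$ with edges $ab$, $ax_i$ and $by_i$ ($1\le i\le n$). $G+H$ is the join: the disjoint union of $G$ and $H$ plus all edges between $V(G)$ and $V(H)$. *)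

theory Defs
  imports Main
begin

text \<open>A finite simple graph is represented as a pair (vertex set, edge set), where every
edge is a two-element set of vertices.\<close>

type_synonym 'a graph = "'a set \<times> 'a set set"

definition verts :: "'a graph \<Rightarrow> 'a set" where "verts G = fst G"
definition edges :: "'a graph \<Rightarrow> 'a set set" where "edges G = snd G"

definition nbhd :: "'a graph \<Rightarrow> 'a \<Rightarrow> 'a set" where
  "nbhd G u = {x \<in> verts G. x \<noteq> u \<and> {u, x} \<in> edges G}"

definition weight :: "'a graph \<Rightarrow> ('a \<Rightarrow> nat) \<Rightarrow> 'a \<Rightarrow> nat" where
  "weight G f u = (\<Sum>x\<in>nbhd G u. f x)"

definition ld_antimagic :: "'a graph \<Rightarrow> ('a \<Rightarrow> nat) \<Rightarrow> bool" where
  "ld_antimagic G f \<longleftrightarrow>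
     bij_betw f (verts G) {1..card (verts G)} \<and>
     (\<forall>u v. u \<noteq> v \<and> {u, v} \<in> edges G \<longrightarrow> weight G f u \<noteq> weight G f v)"

definition chi_ld :: "'a graph \<Rightarrow> nat" where
  "chi_ld G = Min {card (weight G f ` verts G) | f. ld_antimagic G f}"

definition graph_join :: "'a graph \<Rightarrow> 'b graph \<Rightarrow> ('a + 'b) graph" where
  "graph_join G H =
    (Inl ` verts G \<union> Inr ` verts H,
     (image Inl) ` edges G \<union> (image Inr) ` edges H \<union>
     {{Inl u, Inr v} | u v. u \<in> verts G \<and> v \<in> verts H})"

definition friendship :: "nat \<Rightarrow> nat graph" where
  "friendship n =
    ({0..2*n},
     (\<Union>i\<in>{1..n}. {{0, 2*i-1}, {0, 2*i}, {2*i-1, 2*i}}))"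

text \<open>Bistar B_{n,n}: a = 0, b = 1, x_i = i+1, y_i = n+1+i (1 \<le> i \<le> n).\<close>
definition bistar :: "nat \<Rightarrow> nat graph" where
  "bistar n =
    ({0..2*n+1},
     {{0, 1}} \<union> (\<Union>i\<in>{1..n}. {{0, i+1}, {1, n+1+i}}))"

end

theory Submission
  imports Defs
begin



definition pt :: "nat \<Rightarrow> nat" where "pt q = (if odd q then q+1 else q-1)"

lemma fr_edge:
  assumes "u \<noteq> v"
  shows "{u,v} \<in> snd (friendship n) \<longleftrightarrow>
    (u=0 \<and> 1\<le>v \<and> v\<le>2*n) \<or> (v=0 \<and> 1\<le>u \<and> u\<le>2*n) \<or> (1\<le>u \<and> u\<le>2*n \<and> v = pt u)"
proof
  assume "{u,v} \<in> snd (friendship n)"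
  then obtain i where i: "i \<in> {1..n}" "{u,v} \<in> {{0, 2*i-1}, {0, 2*i}, {2*i-1, 2*i}}"
    unfolding friendship_def by auto
  then show "(u=0 \<and> 1\<le>v \<and> v\<le>2*n) \<or> (v=0 \<and> 1\<le>u \<and> u\<le>2*n) \<or> (1\<le>u \<and> u\<le>2*n \<and> v = pt u)"
    using assms by (auto simp: doubleton_eq_iff pt_def)
next
  assume h: "(u=0 \<and> 1\<le>v \<and> v\<le>2*n) \<or> (v=0 \<and> 1\<le>u \<and> u\<le>2*n) \<or> (1\<le>u \<and> u\<le>2*n \<and> v = pt u)"
  have "\<exists>i\<in>{1..n}. {u,v} \<in> {{0, 2*i-1}, {0, 2*i}, {2*i-1, 2*i}}"
  proof (cases "u = 0")
    case True
    with h assms have v: "1\<le>v" "v\<le>2*n" by (auto simp: pt_def)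
    show ?thesis
    proof (cases "odd v")
      case True then show ?thesis using v \<open>u=0\<close>
        by (intro bexI[of _ "(v+1) div 2"]) (auto elim!: oddE)
    next
      case False then show ?thesis using v \<open>u=0\<close>
        by (intro bexI[of _ "v div 2"]) (auto elim!: evenE)
    qed
  next
    case u0: False
    show ?thesis
    proof (cases "v = 0")
      case True
      with h u0 have v: "1\<le>u" "u\<le>2*n" by (auto simp: pt_def)
      show ?thesis
      proof (cases "odd u")
        case True then show ?thesis using v \<open>v=0\<close>
          by (intro bexI[of _ "(u+1) div 2"]) (auto elim!: oddE)
      next
        case False then show ?thesis using v \<open>v=0\<close>
          by (intro bexI[of _ "u div 2"]) (auto elim!: evenE)
      qed
    next
      case False
      with h u0 have v: "1\<le>u" "u\<le>2*n" "v = pt u" by auto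
      show ?thesis
      proof (cases "odd u")
        case True then show ?thesis using v
          by (intro bexI[of _ "(u+1) div 2"]) (auto elim!: oddE simp: pt_def)
      next
        case False then show ?thesis using v
          by (intro bexI[of _ "u div 2"]) (auto elim!: evenE simp: pt_def)
      qed
    qed
  qed
  then show "{u,v} \<in> snd (friendship n)" unfolding friendship_def by auto
qed


lemma bs_edge:
  "{u,v} \<in> snd (bistar n) \<longleftrightarrow>
    {u,v} = {0,1} \<or> (\<exists>i\<in>{1..n}. {u,v} = {0,i+1} \<or> {u,v} = {1,n+1+i})"
  unfolding bistar_def by auto

abbreviation GG :: "nat \<Rightarrow> (nat + nat) graph" where
  "GG n \<equiv> graph_join (friendship n) (bistar n)"

lemma verts_G: "verts (GG n) = Inl ` {0..2*n} \<union> Inr ` {0..2*n+1}"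
  by (simp add: graph_join_def verts_def friendship_def bistar_def)

lemma img_Inl_eq: "Inl ` e = {Inl u, Inl v} \<longleftrightarrow> e = {u,v}"
proof -
  have e: "{Inl u, Inl v} = Inl ` {u,v}" by simp
  show ?thesis unfolding e by (rule inj_image_eq_iff[OF inj_Inl])
qed

lemma img_Inr_eq: "Inr ` e = {Inr u, Inr v} \<longleftrightarrow> e = {u,v}"
proof -
  have e: "{Inr u, Inr v} = Inr ` {u,v}" by simp
  show ?thesis unfolding e by (rule inj_image_eq_iff[OF inj_Inr])
qed


lemma img_Inl_eq': "({Inl u, Inl v} = Inl ` e) \<longleftrightarrow> e = {u,v}"
  using img_Inl_eq by metis
lemma img_Inr_eq': "({Inr u, Inr v} = Inr ` e) \<longleftrightarrow> e = {u,v}"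
  using img_Inr_eq by metis

lemma mem_imgL: "{Inl u, Inl v} \<in> (image Inl) ` F \<longleftrightarrow> {u,v} \<in> F"
  by (simp add: image_iff img_Inl_eq')
lemma mem_imgR: "{Inr u, Inr v} \<in> (image Inr) ` F \<longleftrightarrow> {u,v} \<in> F"
  by (simp add: image_iff img_Inr_eq')

lemma notin_imgR: "{Inl u, x} \<notin> (image Inr) ` X"
proof
  assume "{Inl u, x} \<in> (image Inr) ` X"
  then obtain e where "{Inl u, x} = Inr ` e" by blast
  then have "Inl u \<in> Inr ` e" by (metis insertI1)
  then show False by blast
qed
lemma notin_imgL: "{Inr u, x} \<notin> (image Inl) ` X"
proof
  assume "{Inr u, x} \<in> (image Inl) ` X"
  then obtain e where "{Inr u, x} = Inl ` e" by blast
  then have "Inr u \<in> Inl ` e" by (metis insertI1)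
  then show False by blast
qed
lemma notin_imgR': "{x, Inl u} \<notin> (image Inr) ` X"
  using notin_imgR by (metis insert_commute)

lemma notin_imgL': "{x, Inr u} \<notin> (image Inl) ` X"
  using notin_imgL by (metis insert_commute)

lemma cross_LL: "{Inl u, Inl v} \<notin> {{Inl a, Inr b} | a b. P a b}"
proof
  assume "{Inl u, Inl v} \<in> {{Inl a, Inr b} | a b. P a b}"
  then obtain a b where "{Inl u, Inl v} = {Inl a, Inr b}" by blast
  then have "Inr b \<in> {Inl u, Inl v}" by (metis insertCI)
  then show False by blast
qed
lemma cross_RR: "{Inr u, Inr v} \<notin> {{Inl a, Inr b} | a b. P a b}"
proof
  assume "{Inr u, Inr v} \<in> {{Inl a, Inr b} | a b. P a b}"
  then obtain a b where "{Inr u, Inr v} = {Inl a, Inr b}" by blast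
  then have "Inl a \<in> {Inr u, Inr v}" by (metis insertCI)
  then show False by blast
qed
lemma cross_LR: "{Inl u, Inr v} \<in> {{Inl a, Inr b} | a b. P a b} \<longleftrightarrow> P u v"
proof
  assume "{Inl u, Inr v} \<in> {{Inl a, Inr b} | a b. P a b}"
  then obtain a b where "{Inl u, Inr v} = {Inl a, Inr b}" "P a b" by blast
  then show "P u v" by (simp add: doubleton_eq_iff)
qed blast

lemma edge_LL: "{Inl u, Inl v} \<in> edges (GG n) \<longleftrightarrow> {u,v} \<in> snd (friendship n)"
  unfolding graph_join_def edges_def snd_conv Un_iff
  by (simp only: mem_imgL notin_imgR cross_LL simp_thms)

lemma edge_RR: "{Inr u, Inr v} \<in> edges (GG n) \<longleftrightarrow> {u,v} \<in> snd (bistar n)"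
  unfolding graph_join_def edges_def snd_conv Un_iff
  by (simp only: mem_imgR notin_imgL cross_RR simp_thms)

lemma edge_LR: "{Inl u, Inr v} \<in> edges (GG n) \<longleftrightarrow> u \<le> 2*n \<and> v \<le> 2*n+1"
  unfolding graph_join_def edges_def snd_conv Un_iff
  by (simp only: notin_imgL' notin_imgR cross_LR simp_thms) (simp add: verts_def friendship_def bistar_def)


lemma edge_RL: "{Inr v, Inl u} \<in> edges (GG n) \<longleftrightarrow> u \<le> 2*n \<and> v \<le> 2*n+1"
  using edge_LR by (metis insert_commute)

lemma pt_props: assumes "1 \<le> q" "q \<le> 2*n"
  shows "1 \<le> pt q" "pt q \<le> 2*n" "pt q \<noteq> q" "pt (pt q) = q" "pt q \<noteq> 0"
  using assms unfolding pt_def by presburger+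

lemma nb_c: "nbhd (GG n) (Inl 0) = Inl ` {1..2*n} \<union> Inr ` {0..2*n+1}"
proof (rule set_eqI)
  fix x show "x \<in> nbhd (GG n) (Inl 0) \<longleftrightarrow> x \<in> Inl ` {1..2*n} \<union> Inr ` {0..2*n+1}"
  proof (cases x)
    case (Inl y)
    show ?thesis
    proof (cases "y = 0")
      case True then show ?thesis using Inl by (auto simp: nbhd_def)
    next
      case False then show ?thesis using Inl fr_edge[of 0 y n]
        by (auto simp: nbhd_def verts_G edge_LL)
    qed
  next
    case (Inr y)
    then show ?thesis by (auto simp: nbhd_def verts_G edge_LR)
  qed
qed


lemma nb_leaf: assumes "1 \<le> q" "q \<le> 2*n"
  shows "nbhd (GG n) (Inl q) = {Inl 0, Inl (pt q)} \<union> Inr ` {0..2*n+1}"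
proof (rule set_eqI)
  fix x show "x \<in> nbhd (GG n) (Inl q) \<longleftrightarrow> x \<in> {Inl 0, Inl (pt q)} \<union> Inr ` {0..2*n+1}"
  proof (cases x)
    case (Inl y)
    show ?thesis
    proof (cases "y = q")
      case True then show ?thesis using Inl pt_props[OF assms] assms by (auto simp: nbhd_def)
    next
      case False then show ?thesis using Inl fr_edge[of q y n] pt_props[OF assms] assms
        by (auto simp: nbhd_def verts_G edge_LL)
    qed
  next
    case (Inr y)
    then show ?thesis using assms by (auto simp: nbhd_def verts_G edge_LR)
  qed
qed



lemma bs_edge2: assumes "u \<noteq> v"
  shows "{u,v} \<in> snd (bistar n) \<longleftrightarrow> (u=0\<and>v=1) \<or> (u=1\<and>v=0) \<or> (u=0 \<and> 2\<le>v \<and> v\<le>n+1) \<or> (v=0 \<and> 2\<le>u \<and> u\<le>n+1)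
     \<or> (u=1 \<and> n+2\<le>v \<and> v\<le>2*n+1) \<or> (v=1 \<and> n+2\<le>u \<and> u\<le>2*n+1)" (is "?L \<longleftrightarrow> ?R")
proof
  assume ?L
  then have "{u,v} = {0,1} \<or> (\<exists>i\<in>{1..n}. {u,v} = {0,i+1} \<or> {u,v} = {1,n+1+i})"
    unfolding bistar_def by auto
  then show ?R
  proof
    assume "{u,v} = {0,1}" then show ?R by (auto simp: doubleton_eq_iff)
  next
    assume "\<exists>i\<in>{1..n}. {u,v} = {0,i+1} \<or> {u,v} = {1,n+1+i}"
    then obtain i where "i\<in>{1..n}" "{u,v} = {0,i+1} \<or> {u,v} = {1,n+1+i}" by blast
    then show ?R by (auto simp: doubleton_eq_iff)
  qed
next
  assume r: ?R
  have "{u,v} = {0,1} \<or> (\<exists>i\<in>{1..n}. {u,v} = {0,i+1} \<or> {u,v} = {1,n+1+i})"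
  proof -
    consider "(u=0\<and>v=1) \<or> (u=1\<and>v=0)" | "u=0 \<and> 2\<le>v \<and> v\<le>n+1" | "v=0 \<and> 2\<le>u \<and> u\<le>n+1"
      | "u=1 \<and> n+2\<le>v \<and> v\<le>2*n+1" | "v=1 \<and> n+2\<le>u \<and> u\<le>2*n+1" using r by blast
    then show ?thesis
    proof cases
      case 1 then show ?thesis by auto
    next
      case 2 then have "{u,v} = {0,(v-1)+1}" "v-1 \<in> {1..n}" by auto
      then show ?thesis by blast
    next
      case 3 then have "{u,v} = {0,(u-1)+1}" "u-1 \<in> {1..n}" by auto
      then show ?thesis by blast
    next
      case 4 then have "{u,v} = {1,n+1+(v-n-1)}" "v-n-1 \<in> {1..n}" by auto
      then show ?thesis by blast
    next
      case 5 then have "{u,v} = {1,n+1+(u-n-1)}" "u-n-1 \<in> {1..n}" by auto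
      then show ?thesis by blast
    qed
  qed
  then show ?L unfolding bistar_def by auto
qed

lemma nb_a: assumes "1 \<le> n"
  shows "nbhd (GG n) (Inr 0) = Inr ` {1..n+1} \<union> Inl ` {0..2*n}"
proof (rule set_eqI)
  fix x show "x \<in> nbhd (GG n) (Inr 0) \<longleftrightarrow> x \<in> Inr ` {1..n+1} \<union> Inl ` {0..2*n}"
  proof (cases x)
    case (Inr y)
    show ?thesis
    proof (cases "y = 0")
      case True then show ?thesis using Inr by (auto simp: nbhd_def)
    next
      case False
      have "{0,y} \<in> snd (bistar n) \<longleftrightarrow> y \<in> {1..n+1}"
        unfolding bs_edge2[OF False[symmetric]] using False by auto
      then show ?thesis using Inr False assms
        by (auto simp: nbhd_def verts_G edge_RR)
    qed
  next
    case (Inl y)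
    then show ?thesis by (auto simp: nbhd_def verts_G edge_RL)
  qed
qed

lemma nb_b: assumes "1 \<le> n"
  shows "nbhd (GG n) (Inr 1) = Inr ` ({0} \<union> {n+2..2*n+1}) \<union> Inl ` {0..2*n}"
proof (rule set_eqI)
  fix x show "x \<in> nbhd (GG n) (Inr 1) \<longleftrightarrow> x \<in> Inr ` ({0} \<union> {n+2..2*n+1}) \<union> Inl ` {0..2*n}"
  proof (cases x)
    case (Inr y)
    show ?thesis
    proof (cases "y = 1")
      case True then show ?thesis using Inr by (auto simp: nbhd_def)
    next
      case False
      have "{1,y} \<in> snd (bistar n) \<longleftrightarrow> y \<in> ({0} \<union> {n+2..2*n+1})"
        unfolding bs_edge2[OF False[symmetric]] using False by auto
      then show ?thesis using Inr False assms
        by (auto simp: nbhd_def verts_G edge_RR)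
    qed
  next
    case (Inl y)
    then show ?thesis by (auto simp: nbhd_def verts_G edge_RL)
  qed
qed

lemma nb_x: assumes "2 \<le> j" "j \<le> n+1"
  shows "nbhd (GG n) (Inr j) = {Inr 0} \<union> Inl ` {0..2*n}"
proof (rule set_eqI)
  fix x show "x \<in> nbhd (GG n) (Inr j) \<longleftrightarrow> x \<in> {Inr 0} \<union> Inl ` {0..2*n}"
  proof (cases x)
    case (Inr y)
    show ?thesis
    proof (cases "y = j")
      case True then show ?thesis using Inr assms by (auto simp: nbhd_def)
    next
      case False
      have "{j,y} \<in> snd (bistar n) \<longleftrightarrow> y = 0"
        unfolding bs_edge2[OF False[symmetric]] using False assms by auto
      then show ?thesis using Inr False assms
        by (auto simp: nbhd_def verts_G edge_RR)
    qed
  next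
    case (Inl y)
    then show ?thesis using assms by (auto simp: nbhd_def verts_G edge_RL)
  qed
qed

lemma nb_y: assumes "n+2 \<le> j" "j \<le> 2*n+1"
  shows "nbhd (GG n) (Inr j) = {Inr 1} \<union> Inl ` {0..2*n}"
proof (rule set_eqI)
  fix x show "x \<in> nbhd (GG n) (Inr j) \<longleftrightarrow> x \<in> {Inr 1} \<union> Inl ` {0..2*n}"
  proof (cases x)
    case (Inr y)
    show ?thesis
    proof (cases "y = j")
      case True then show ?thesis using Inr assms by (auto simp: nbhd_def)
    next
      case False
      have "{j,y} \<in> snd (bistar n) \<longleftrightarrow> y = 1"
        unfolding bs_edge2[OF False[symmetric]] using False assms by auto
      then show ?thesis using Inr False assms
        by (auto simp: nbhd_def verts_G edge_RR)
    qed
  next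
    case (Inl y)
    then show ?thesis using assms by (auto simp: nbhd_def verts_G edge_RL)
  qed
qed




definition FA :: "nat \<Rightarrow> (nat + nat \<Rightarrow> nat) \<Rightarrow> nat" where
  "FA n f = (\<Sum>i\<in>{0..2*n}. f (Inl i))"
definition FB :: "nat \<Rightarrow> (nat + nat \<Rightarrow> nat) \<Rightarrow> nat" where
  "FB n f = (\<Sum>j\<in>{0..2*n+1}. f (Inr j))"

lemma sumL: "sum f (Inl ` A) = (\<Sum>i\<in>A. f (Inl i))"
  by (simp add: sum.reindex)
lemma sumR: "sum f (Inr ` A) = (\<Sum>i\<in>A. f (Inr i))"
  by (simp add: sum.reindex)

lemma w_c: "weight (GG n) f (Inl 0) = (\<Sum>i\<in>{1..2*n}. f (Inl i)) + FB n f"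
  unfolding weight_def nb_c by (subst sum.union_disjoint) (auto simp: sumL sumR FB_def)

lemma w_leaf: assumes "1 \<le> q" "q \<le> 2*n"
  shows "weight (GG n) f (Inl q) = f (Inl 0) + f (Inl (pt q)) + FB n f"
  unfolding weight_def nb_leaf[OF assms] using pt_props[OF assms]
  by (subst sum.union_disjoint) (auto simp: sumL sumR FB_def)

lemma w_a: assumes "1 \<le> n"
  shows "weight (GG n) f (Inr 0) = (\<Sum>j\<in>{1..n+1}. f (Inr j)) + FA n f"
  unfolding weight_def nb_a[OF assms]
  by (subst sum.union_disjoint) (auto simp: sumL sumR FA_def)

lemma w_b: assumes "1 \<le> n"
  shows "weight (GG n) f (Inr 1) = f (Inr 0) + (\<Sum>j\<in>{n+2..2*n+1}. f (Inr j)) + FA n f"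
proof -
  have "(\<Sum>j\<in>{0} \<union> {n+2..2*n+1}. f (Inr j)) = f (Inr 0) + (\<Sum>j\<in>{n+2..2*n+1}. f (Inr j))"
    by (subst sum.union_disjoint) auto
  moreover have "weight (GG n) f (Inr 1) = sum f (Inr ` ({0} \<union> {n+2..2*n+1})) + sum f (Inl ` {0..2*n})"
    unfolding weight_def nb_b[OF assms] by (rule sum.union_disjoint) auto
  ultimately show ?thesis unfolding sumR sumL FA_def by simp
qed

lemma w_x: assumes "2 \<le> j" "j \<le> n+1"
  shows "weight (GG n) f (Inr j) = f (Inr 0) + FA n f"
  unfolding weight_def nb_x[OF assms]
  by (subst sum.union_disjoint) (auto simp: sumL sumR FA_def)

lemma w_y: assumes "n+2 \<le> j" "j \<le> 2*n+1"
  shows "weight (GG n) f (Inr j) = f (Inr 1) + FA n f"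
  unfolding weight_def nb_y[OF assms]
  by (subst sum.union_disjoint) (auto simp: sumL sumR FA_def)


lemma card_V: "card (verts (GG n)) = 4*n+3"
proof -
  have "card (Inl ` {0..2*n} \<union> Inr ` {0..2*n+1} :: (nat+nat) set) = card (Inl ` {0..2*n} :: (nat+nat) set) + card (Inr ` {0..2*n+1} :: (nat+nat) set)"
    by (rule card_Un_disjoint) auto
  also have "\<dots> = (2*n+1) + (2*n+2)" by (simp add: card_image)
  finally show ?thesis by (simp add: verts_G)
qed

lemma count_weights:
  assumes n: "1 \<le> n" and ld: "ld_antimagic (GG n) f"
  shows "card (weight (GG n) f ` verts (GG n)) = 2*n+5"
proof -
  let ?w = "weight (GG n) f"
  have bij: "bij_betw f (verts (GG n)) {1..4*n+3}" using ld card_V by (simp add: ld_antimagic_def)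
  have inj: "inj_on f (verts (GG n))" using bij by (rule bij_betw_imp_inj_on)
  have pos: "\<And>x. x \<in> verts (GG n) \<Longrightarrow> f x \<ge> 1" using bij by (auto dest: bij_betw_apply)
  have E: "\<And>u v. u \<noteq> v \<Longrightarrow> {u,v} \<in> edges (GG n) \<Longrightarrow> ?w u \<noteq> ?w v"
    using ld by (auto simp: ld_antimagic_def)
  define L where "L = (Inl ` {0..2*n} :: (nat+nat) set)"
  define R where "R = (Inr ` {0..2*n+1} :: (nat+nat) set)"
  have V: "verts (GG n) = L \<union> R" by (simp add: verts_G L_def R_def)
  have disj: "?w ` L \<inter> ?w ` R = {}"
  proof (rule ccontr)
    assume "?w ` L \<inter> ?w ` R \<noteq> {}"
    then obtain i j where ij: "i \<le> 2*n" "j \<le> 2*n+1" "?w (Inl i) = ?w (Inr j)"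
      by (auto simp: L_def R_def)
    have "{Inl i, Inr j} \<in> edges (GG n)" using ij by (simp add: edge_LR)
    then show False using E[of "Inl i" "Inr j"] ij by auto
  qed
  have injL: "inj_on ?w L"
  proof (rule inj_onI)
    fix x y assume xy: "x \<in> L" "y \<in> L" "?w x = ?w y"
    then obtain i j where i: "x = Inl i" "i \<le> 2*n" and j: "y = Inl j" "j \<le> 2*n" by (auto simp: L_def)
    show "x = y"
    proof (rule ccontr)
      assume ne: "x \<noteq> y"
      then have ij: "i \<noteq> j" using i j by auto
      show False
      proof (cases "i = 0 \<or> j = 0 \<or> j = pt i")
        case True
        then have "{i,j} \<in> snd (friendship n)" using fr_edge[OF ij, of n] i j ij by auto
        then have "{x,y} \<in> edges (GG n)" using i j by (simp add: edge_LL)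
        then show False using E ne xy by blast
      next
        case False
        then have i1: "1 \<le> i" "1 \<le> j" "j \<noteq> pt i" by auto
        have "pt i \<noteq> pt j" using pt_props[OF i1(1) i(2)] pt_props[OF i1(2) j(2)] ij by metis
        moreover have "Inl (pt i) \<in> verts (GG n)" "Inl (pt j) \<in> verts (GG n)"
          using pt_props[OF i1(1) i(2)] pt_props[OF i1(2) j(2)] by (auto simp: verts_G)
        ultimately have "f (Inl (pt i)) \<noteq> f (Inl (pt j))" using inj by (auto dest: inj_onD)
        moreover have "?w x = f (Inl 0) + f (Inl (pt i)) + FB n f" using w_leaf[OF i1(1) i(2)] i by simp
        moreover have "?w y = f (Inl 0) + f (Inl (pt j)) + FB n f" using w_leaf[OF i1(2) j(2)] j by simp
        ultimately show False using xy by simp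
      qed
    qed
  qed
  have cL: "card (?w ` L) = 2*n+1"
    using card_image[OF injL] by (simp add: L_def card_image)
  have wR: "?w ` R = {?w (Inr 0), ?w (Inr 1), f (Inr 0) + FA n f, f (Inr 1) + FA n f}"
  proof
    show "?w ` R \<subseteq> {?w (Inr 0), ?w (Inr 1), f (Inr 0) + FA n f, f (Inr 1) + FA n f}"
    proof
      fix z assume "z \<in> ?w ` R"
      then obtain j where j: "j \<le> 2*n+1" "z = ?w (Inr j)" by (auto simp: R_def)
      consider "j = 0" | "j = 1" | "2 \<le> j \<and> j \<le> n+1" | "n+2 \<le> j \<and> j \<le> 2*n+1" using j by linarith
      then show "z \<in> {?w (Inr 0), ?w (Inr 1), f (Inr 0) + FA n f, f (Inr 1) + FA n f}"
        by cases (use j w_x w_y in auto)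
    qed
  next
    have "Inr 2 \<in> R" "Inr (n+2) \<in> R" "Inr 0 \<in> R" "Inr 1 \<in> R" using n by (auto simp: R_def)
    moreover have "?w (Inr 2) = f (Inr 0) + FA n f" using n by (intro w_x) auto
    moreover have "?w (Inr (n+2)) = f (Inr 1) + FA n f" using n by (intro w_y) auto
    ultimately show "{?w (Inr 0), ?w (Inr 1), f (Inr 0) + FA n f, f (Inr 1) + FA n f} \<subseteq> ?w ` R"
      by (metis empty_subsetI image_eqI insert_subset)
  qed
  have v01: "Inr 0 \<in> verts (GG n)" "Inr 1 \<in> verts (GG n)" "Inr 2 \<in> verts (GG n)" "Inr (n+2) \<in> verts (GG n)"
    using n by (auto simp: verts_G)
  have e01: "{Inr 0, Inr 1} \<in> edges (GG n)" "{Inr 0, Inr 2} \<in> edges (GG n)" "{Inr 1, Inr (n+2)} \<in> edges (GG n)"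
    using n by (auto simp: edge_RR bs_edge2)
  have d1: "?w (Inr 0) \<noteq> ?w (Inr 1)" using E e01(1) by auto
  have d2: "?w (Inr 0) \<noteq> f (Inr 0) + FA n f"
    using E[OF _ e01(2)] w_x[of 2 n f] n by auto
  have d3: "?w (Inr 1) \<noteq> f (Inr 1) + FA n f"
    using E[OF _ e01(3)] w_y[of n "n+2" f] n by auto
  have d4: "f (Inr 0) + FA n f \<noteq> f (Inr 1) + FA n f"
    using inj v01 by (auto dest: inj_onD)
  have d5: "?w (Inr 0) \<noteq> f (Inr 1) + FA n f"
  proof -
    have "(\<Sum>j\<in>{1,2}. f (Inr j)) \<le> (\<Sum>j\<in>{1..n+1}. f (Inr j))"
      using n by (intro sum_mono2) auto
    moreover have "f (Inr 2) \<ge> 1" using pos v01 by auto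
    ultimately show ?thesis using w_a[OF n, of f] by simp
  qed
  have d6: "?w (Inr 1) \<noteq> f (Inr 0) + FA n f"
  proof -
    have "(\<Sum>j\<in>{n+2}. f (Inr j)) \<le> (\<Sum>j\<in>{n+2..2*n+1}. f (Inr j))"
      using n by (intro sum_mono2) auto
    moreover have "f (Inr (n+2)) \<ge> 1" using pos v01 by auto
    ultimately show ?thesis using w_b[OF n, of f] by simp
  qed
  have cR: "card (?w ` R) = 4" unfolding wR using d1 d2 d3 d4 d5 d6 by auto
  have "card (?w ` verts (GG n)) = card (?w ` L) + card (?w ` R)"
    unfolding V image_Un by (rule card_Un_disjoint) (use disj in \<open>auto simp: L_def R_def\<close>)
  then show ?thesis using cL cR by simp
qed


definition lab :: "nat \<Rightarrow> nat + nat \<Rightarrow> nat" where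
  "lab n x = (case x of Inl i \<Rightarrow> i+1 | Inr j \<Rightarrow>
     (if j=0 then 2*n+2 else if j=1 then 2*n+3 else if j \<le> n+1 then 3*n+2+j else n+2+j))"

lemma lab_bij: "bij_betw (lab n) (verts (GG n)) {1..card (verts (GG n))}"
proof -
  have inj: "inj_on (lab n) (verts (GG n))"
    by (rule inj_onI) (auto simp: verts_G lab_def split: if_splits)
  have sub: "lab n ` verts (GG n) \<subseteq> {1..4*n+3}"
    by (auto simp: verts_G lab_def)
  have "card (lab n ` verts (GG n)) = 4*n+3" using card_image[OF inj] card_V by simp
  then have "lab n ` verts (GG n) = {1..4*n+3}"
    using sub by (intro card_subset_eq) auto
  then show ?thesis using inj card_V by (simp add: bij_betw_def)
qed

lemma gauss2: "2 * (\<Sum>i\<in>{0..m::nat}. i+1) = (m+1)*(m+2)"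
  by (induction m) (auto simp: algebra_simps)

lemma lab_ld: assumes n: "1 \<le> n" shows "ld_antimagic (GG n) (lab n)"
proof -
  let ?f = "lab n"
  let ?w = "weight (GG n) ?f"
  define SX where "SX = (\<Sum>j\<in>{2..n+1}. ?f (Inr j))"
  define SY where "SY = (\<Sum>j\<in>{n+2..2*n+1}. ?f (Inr j))"
  have FA: "FA n ?f = (2*n+1)*(n+1)"
  proof -
    have "FA n ?f = (\<Sum>i\<in>{0..2*n}. i+1)" by (simp add: FA_def lab_def)
    with gauss2[of "2*n"] show ?thesis by (simp add: algebra_simps)
  qed
  have FB: "FB n ?f = 4*n+5+SX+SY"
  proof -
    have "{0..2*n+1} = {0,1} \<union> ({2..n+1} \<union> {n+2..2*n+1})" by auto
    then have "FB n ?f = (\<Sum>j\<in>{0,1}. ?f (Inr j)) + (SX + SY)"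
      unfolding FB_def SX_def SY_def
      by (simp only:) (subst sum.union_disjoint; (subst sum.union_disjoint)?; auto)
    then show ?thesis by (simp add: lab_def)
  qed
  have SX1: "SX \<ge> n*(3*n+4)"
  proof -
    have "(\<Sum>j\<in>{2..n+1}. (3*n+4)) \<le> SX" unfolding SX_def
      by (rule sum_mono) (auto simp: lab_def)
    then show ?thesis by simp
  qed
  have SY1: "SY \<ge> n*(2*n+4)"
  proof -
    have "(\<Sum>j\<in>{n+2..2*n+1}. (2*n+4)) \<le> SY" unfolding SY_def
      by (rule sum_mono) (auto simp: lab_def)
    then show ?thesis by simp
  qed
  have SY2: "SY \<le> n*(3*n+3)"
  proof -
    have "SY \<le> (\<Sum>j\<in>{n+2..2*n+1}. (3*n+3))" unfolding SY_def
      by (rule sum_mono) (auto simp: lab_def)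
    then show ?thesis by simp
  qed
  have wa: "?w (Inr 0) = FA n ?f + 2*n+3 + SX"
  proof -
    have "(\<Sum>j\<in>{1..n+1}. ?f (Inr j)) = ?f (Inr 1) + SX" unfolding SX_def
      using n by (subst sum.atLeast_Suc_atMost) (auto simp: numeral_2_eq_2)
    then show ?thesis using w_a[OF n] by (simp add: lab_def)
  qed
  have wb: "?w (Inr 1) = FA n ?f + 2*n+2 + SY" using w_b[OF n] by (simp add: lab_def SY_def)
  have wx: "\<And>j. 2 \<le> j \<Longrightarrow> j \<le> n+1 \<Longrightarrow> ?w (Inr j) = FA n ?f + 2*n+2"
    using w_x by (simp add: lab_def)
  have wy: "\<And>j. n+2 \<le> j \<Longrightarrow> j \<le> 2*n+1 \<Longrightarrow> ?w (Inr j) = FA n ?f + 2*n+3"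
    using w_y by (simp add: lab_def)
  have wc: "?w (Inl 0) = FA n ?f + 4*n+4+SX+SY"
  proof -
    have "FA n ?f = ?f (Inl 0) + (\<Sum>i\<in>{1..2*n}. ?f (Inl i))" unfolding FA_def
      by (subst sum.atLeast_Suc_atMost) auto
    then show ?thesis using w_c[of n ?f] FB by (simp add: lab_def)
  qed
  have wl: "\<And>q. 1 \<le> q \<Longrightarrow> q \<le> 2*n \<Longrightarrow> ?w (Inl q) = 4*n+7+SX+SY + pt q"
    using w_leaf FB by (simp add: lab_def)
  have nn: "n*n \<ge> 1" using n by (simp add: Suc_le_eq)
  have FAe: "FA n ?f = 2*(n*n)+3*n+1" unfolding FA by (simp add: algebra_simps)
  have FAbig: "FA n ?f > 2*n+3" using FAe n nn by linarith
  have K1: "FA n ?f < 2*n+5+SY" using SY1 unfolding FA by (simp add: algebra_simps)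
  have K2: "FA n ?f < 2*n+6+SX" using SX1 unfolding FA by (simp add: algebra_simps)
  have K3: "SY < SX" using SX1 SY2 n by (simp add: algebra_simps)
  have Fbig: "\<And>i. i \<le> 2*n \<Longrightarrow> ?w (Inl i) \<ge> 4*n+8+SX+SY"
  proof -
    fix i assume i: "i \<le> 2*n"
    show "?w (Inl i) \<ge> 4*n+8+SX+SY"
    proof (cases "i = 0")
      case True then show ?thesis using wc FAbig by simp
    next
      case False then show ?thesis using wl[of i] i pt_props[of i n] by simp
    qed
  qed
  have Bsmall: "\<And>j. j \<le> 2*n+1 \<Longrightarrow> ?w (Inr j) < 4*n+8+SX+SY"
  proof -
    fix j assume j: "j \<le> 2*n+1"
    consider "j = 0" | "j = 1" | "2 \<le> j \<and> j \<le> n+1" | "n+2 \<le> j \<and> j \<le> 2*n+1" using j by linarith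
    then show "?w (Inr j) < 4*n+8+SX+SY"
      by cases (use wa wb wx wy K1 K2 in auto)
  qed
  have edges_ok: "?w u \<noteq> ?w v" if uv: "u \<noteq> v" "{u,v} \<in> edges (GG n)" for u v
  proof (cases u)
    case (Inl i)
    show ?thesis
    proof (cases v)
      case (Inl j)
      have ij: "i \<noteq> j" using uv Inl \<open>u = Inl i\<close> by auto
      have "{i,j} \<in> snd (friendship n)" using uv \<open>u = Inl i\<close> Inl by (simp add: edge_LL)
      then consider "i = 0" "1 \<le> j" "j \<le> 2*n" | "j = 0" "1 \<le> i" "i \<le> 2*n" | "1 \<le> i" "i \<le> 2*n" "j = pt i"
        using fr_edge[OF ij] by blast
      then show ?thesis
      proof cases
        case 1 then show ?thesis using \<open>u = Inl i\<close> Inl wc wl[of j] FAbig pt_props[of j n] by simp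
      next
        case 2 then show ?thesis using \<open>u = Inl i\<close> Inl wc wl[of i] FAbig pt_props[of i n] by simp
      next
        case 3 then show ?thesis using \<open>u = Inl i\<close> Inl wl[of i] wl[of j] pt_props[of i n] ij by simp
      qed
    next
      case (Inr j)
      have "i \<le> 2*n" "j \<le> 2*n+1" using uv \<open>u = Inl i\<close> Inr by (simp_all add: edge_LR)
      then show ?thesis using Fbig Bsmall \<open>u = Inl i\<close> Inr by (metis not_le less_le_trans le_less)
    qed
  next
    case (Inr i)
    show ?thesis
    proof (cases v)
      case (Inl j)
      have "j \<le> 2*n" "i \<le> 2*n+1" using uv \<open>u = Inr i\<close> Inl by (simp_all add: edge_RL)
      then show ?thesis using Fbig Bsmall \<open>u = Inr i\<close> Inl by (metis not_le less_le_trans le_less)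
    next
      case (Inr j)
      have ij: "i \<noteq> j" using uv Inr \<open>u = Inr i\<close> by auto
      have "{i,j} \<in> snd (bistar n)" using uv \<open>u = Inr i\<close> Inr by (simp add: edge_RR)
      then have "(i=0\<and>j=1) \<or> (i=1\<and>j=0) \<or> (i=0 \<and> 2\<le>j \<and> j\<le>n+1) \<or> (j=0 \<and> 2\<le>i \<and> i\<le>n+1)
        \<or> (i=1 \<and> n+2\<le>j \<and> j\<le>2*n+1) \<or> (j=1 \<and> n+2\<le>i \<and> i\<le>2*n+1)"
        using bs_edge2[OF ij] by blast
      then show ?thesis using \<open>u = Inr i\<close> Inr wa wb wx wy K3 SY1 n
        by (elim disjE) (simp_all add: algebra_simps)
    qed
  qed
  show ?thesis unfolding ld_antimagic_def using lab_bij edges_ok by blast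
qed


theorem mainTheorem4:
  fixes n :: nat
  assumes "n \<ge> 1"
  shows "chi_ld (graph_join (friendship n) (bistar n)) = 2*n + 5"
proof -
  have "{card (weight (GG n) f ` verts (GG n)) | f. ld_antimagic (GG n) f} = {2*n+5}"
  proof (rule set_eqI, rule iffI)
    fix x assume "x \<in> {card (weight (GG n) f ` verts (GG n)) | f. ld_antimagic (GG n) f}"
    then show "x \<in> {2*n+5}" using count_weights[OF assms] by auto
  next
    fix x assume "x \<in> {2*n+5}"
    then have "x = card (weight (GG n) (lab n) ` verts (GG n))"
      using count_weights[OF assms lab_ld[OF assms]] by simp
    then show "x \<in> {card (weight (GG n) f ` verts (GG n)) | f. ld_antimagic (GG n) f}"
      using lab_ld[OF assms] by blast
  qed
  then show ?thesis unfolding chi_ld_def by simp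
qed

end
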